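(* (a) If $x,y\in P$ are distinct, then $|\{x,y\}^{\perp}|\geq 3$ in $\mathbb{S}$. (b) If $u',v'\in P'$ are distinct, then $|\{u',v'\}^{\perp}|\geq 3$ in $\mathbb{S}$.
   Context: Let $S=(P,L)$ and $S'=(P',L')$ be generalized quadrangles of order $(2,2)$ (every line has 3 points, every point lies on 3 lines, and for each point $x$ and line $l\not\ni x$ exactly one point of $l$ is collinear with $x$), with an isomorphism $x\mapsto x'$ from $S$ to $S'$ (write $u$ for the preimage of $u'\in P'$). In a point-line geometry, $x^{\perp}$ is $x$ together with all points collinear with $x$, and $A^{\perp}=\bigcap_{a\in A}a^{\perp}$. A triad is a set of three pairwise non-collinear points, complete if $|T^{\perp}|=3$. Let $\mathcal{P}=\{(x,y')\in P\times P':y'\in x'^{\perp}\}$ and $\mathcal{L}$ the set of all $3$-subsets $\{(x,u'),(y,v'),(z,w')\}$ of $\mathcal{P}$ where $T=\{x,y,z\}$ (three distinct points) is a line or complete triad of $S$ and $\{u',v',w'\}=T'^{\perp}$ in $S'$ with $u',v',w'$ distinct. The geometry $\mathbb{S}=(\mathbb{P},\mathbb{L})$ has point set $\mathbb{P}=\mathcal{P}\cup P\cup P'$ (disjoint union) and line set $\mathcal{L}\cup\{\{x,(x,u'),u'\}:(x,u')\in\mathcal{P}\}$. *)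

theory Defs
  imports Main
begin

definition collinear :: "'p set set \<Rightarrow> 'p \<Rightarrow> 'p \<Rightarrow> bool" where
  "collinear Lns x y \<longleftrightarrow> (\<exists>l\<in>Lns. x \<in> l \<and> y \<in> l)"

definition perp :: "'p set \<Rightarrow> 'p set set \<Rightarrow> 'p \<Rightarrow> 'p set" where
  "perp Pts Lns x = insert x {y \<in> Pts. collinear Lns x y}"

definition setperp :: "'p set \<Rightarrow> 'p set set \<Rightarrow> 'p set \<Rightarrow> 'p set" where
  "setperp Pts Lns A = (\<Inter>a\<in>A. perp Pts Lns a)"

definition gq22 :: "'p set \<Rightarrow> 'p set set \<Rightarrow> bool" where
  "gq22 Pts Lns \<longleftrightarrow>
     (\<forall>l\<in>Lns. l \<subseteq> Pts \<and> card l = 3) \<and>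
     (\<forall>x\<in>Pts. card {l\<in>Lns. x \<in> l} = 3) \<and>
     (\<forall>x\<in>Pts. \<forall>l\<in>Lns. x \<notin> l \<longrightarrow> (\<exists>!y. y \<in> l \<and> collinear Lns x y))"

definition geom_iso :: "('p \<Rightarrow> 'q) \<Rightarrow> 'p set \<Rightarrow> 'p set set \<Rightarrow> 'q set \<Rightarrow> 'q set set \<Rightarrow> bool" where
  "geom_iso f P L P' L' \<longleftrightarrow> bij_betw f P P' \<and> (\<lambda>l. f ` l) ` L = L'"

definition triad :: "'p set \<Rightarrow> 'p set set \<Rightarrow> 'p set \<Rightarrow> bool" where
  "triad Pts Lns T \<longleftrightarrow> (\<exists>x y z. T = {x, y, z} \<and> x \<in> Pts \<and> y \<in> Pts \<and> z \<in> Pts \<and>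
      x \<noteq> y \<and> x \<noteq> z \<and> y \<noteq> z \<and>
      \<not> collinear Lns x y \<and> \<not> collinear Lns x z \<and> \<not> collinear Lns y z)"

definition complete_triad :: "'p set \<Rightarrow> 'p set set \<Rightarrow> 'p set \<Rightarrow> bool" where
  "complete_triad Pts Lns T \<longleftrightarrow> triad Pts Lns T \<and> card (setperp Pts Lns T) = 3"

definition calP :: "('p \<Rightarrow> 'q) \<Rightarrow> 'p set \<Rightarrow> 'q set \<Rightarrow> 'q set set \<Rightarrow> ('p \<times> 'q) set" where
  "calP f P P' L' = {(x, y). x \<in> P \<and> y \<in> P' \<and> y \<in> perp P' L' (f x)}"

definition calL :: "('p \<Rightarrow> 'q) \<Rightarrow> 'p set \<Rightarrow> 'p set set \<Rightarrow> 'q set \<Rightarrow> 'q set set \<Rightarrow> ('p \<times> 'q) set set" where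
  "calL f P L P' L' =
    {{(x, u), (y, v), (z, w)} | x y z u v w.
       (x, u) \<in> calP f P P' L' \<and> (y, v) \<in> calP f P P' L' \<and> (z, w) \<in> calP f P P' L' \<and>
       x \<noteq> y \<and> x \<noteq> z \<and> y \<noteq> z \<and>
       ({x, y, z} \<in> L \<or> complete_triad P L {x, y, z}) \<and>
       {u, v, w} = setperp P' L' (f ` {x, y, z}) \<and>
       u \<noteq> v \<and> u \<noteq> w \<and> v \<noteq> w}"

text \<open>The geometry \<S>: points are Inl (pairs of \<P>), Inr (Inl x) for x in P,
  Inr (Inr u') for u' in P' (disjoint union).\<close>
definition bbP :: "('p \<Rightarrow> 'q) \<Rightarrow> 'p set \<Rightarrow> 'q set \<Rightarrow> 'q set set \<Rightarrow> (('p \<times> 'q) + ('p + 'q)) set" where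
  "bbP f P P' L' = Inl ` calP f P P' L' \<union> (Inr \<circ> Inl) ` P \<union> (Inr \<circ> Inr) ` P'"

definition bbL :: "('p \<Rightarrow> 'q) \<Rightarrow> 'p set \<Rightarrow> 'p set set \<Rightarrow> 'q set \<Rightarrow> 'q set set
    \<Rightarrow> (('p \<times> 'q) + ('p + 'q)) set set" where
  "bbL f P L P' L' = (\<lambda>l. Inl ` l) ` calL f P L P' L' \<union>
     {{Inr (Inl x), Inl (x, u), Inr (Inr u)} | x u. (x, u) \<in> calP f P P' L'}"

end

theory Submission
  imports Defs
begin

lemma collinear_sym: "collinear Lns a b = collinear Lns b a"
  unfolding collinear_def by blast

lemma gq_ax:
  assumes g: "gq22 Pts Lns" and x: "x \<in> Pts" and l: "l \<in> Lns" and nl: "x \<notin> l"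
  shows "\<exists>!y. y \<in> l \<and> collinear Lns x y"
proof -
  have "\<forall>x\<in>Pts. \<forall>l\<in>Lns. x \<notin> l \<longrightarrow> (\<exists>!y. y \<in> l \<and> collinear Lns x y)"
    using g unfolding gq22_def by (elim conjE) assumption
  then show ?thesis using nl by (rule mp[OF bspec[OF bspec[OF _ x] l]])
qed

lemma gq_line:
  assumes g: "gq22 Pts Lns" and l: "l \<in> Lns"
  shows "l \<subseteq> Pts" "card l = 3" "finite l"
proof -
  have "\<forall>l\<in>Lns. l \<subseteq> Pts \<and> card l = 3" using g unfolding gq22_def by (elim conjE) assumption
  then have *: "l \<subseteq> Pts \<and> card l = 3" using l by (rule bspec)
  then show "l \<subseteq> Pts" "card l = 3" by (rule conjunct1, rule conjunct2)
  show "finite l" using * by (intro card_ge_0_finite) simp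
qed

lemma gq_pt:
  assumes g: "gq22 Pts Lns" and x: "x \<in> Pts"
  shows "card {l\<in>Lns. x \<in> l} = 3"
proof -
  have "\<forall>x\<in>Pts. card {l\<in>Lns. x \<in> l} = 3" using g unfolding gq22_def by (elim conjE) assumption
  then show ?thesis using x by (rule bspec)
qed

lemma perp_sub: "gq22 Pts Lns \<Longrightarrow> a \<in> Pts \<Longrightarrow> perp Pts Lns a \<subseteq> Pts"
  unfolding perp_def by auto

lemma perp_sym: "b \<in> perp Pts Lns a \<Longrightarrow> a \<in> Pts \<Longrightarrow> a \<in> perp Pts Lns b"
  unfolding perp_def using collinear_sym by fastforce

lemma perp_finite:
  assumes g: "gq22 Pts Lns"
  shows "finite (perp Pts Lns a)"
proof -
  have fin: "finite {l\<in>Lns. a \<in> l}"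
  proof (cases "a \<in> Pts")
    case True
    then have "card {l\<in>Lns. a \<in> l} = 3" using gq_pt[OF g] by blast
    then show ?thesis by (intro card_ge_0_finite) simp
  next
    case False
    then have "{l\<in>Lns. a \<in> l} = {}" using gq_line(1)[OF g] by blast
    then show ?thesis by (simp only: finite.emptyI)
  qed
  have fl: "\<forall>l\<in>{l\<in>Lns. a \<in> l}. finite l"
    using gq_line(3)[OF g] by blast
  have "perp Pts Lns a \<subseteq> insert a (\<Union>{l\<in>Lns. a \<in> l})"
    unfolding perp_def collinear_def by blast
  moreover have "finite (insert a (\<Union>{l\<in>Lns. a \<in> l}))" using fin fl by blast
  ultimately show ?thesis using finite_subset by blast
qed

lemma line_unique:
  assumes g: "gq22 Pts Lns" and m: "m \<in> Lns" and n: "n \<in> Lns"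
    and a: "a \<in> m" "a \<in> n" and y: "y \<in> m" "y \<in> n" and ay: "a \<noteq> y"
  shows "m = n"
proof (rule ccontr)
  assume mn: "m \<noteq> n"
  have cm: "card m = 3" "card n = 3" "n \<subseteq> Pts" using gq_line[OF g m] gq_line[OF g n] by auto
  have "\<not> n \<subseteq> m"
  proof
    assume "n \<subseteq> m"
    moreover have "finite m" using gq_line[OF g m] by blast
    ultimately have "n = m" using cm card_subset_eq by metis
    then show False using mn by simp
  qed
  then obtain z where z: "z \<in> n" "z \<notin> m" by blast
  then have "z \<in> Pts" using cm by auto
  then have "\<exists>!w. w \<in> m \<and> collinear Lns z w" using gq_ax[OF g _ m z(2)] by simp
  moreover have "collinear Lns z a" "collinear Lns z y"
    unfolding collinear_def using n z a y by auto
  ultimately show False using a y ay by blast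
qed

lemma core:
  assumes g: "gq22 Pts Lns" and a: "a \<in> Pts" and b: "b \<in> Pts" and ab: "a \<noteq> b"
  shows "3 \<le> card (perp Pts Lns a \<inter> perp Pts Lns b)"
proof (cases "collinear Lns a b")
  case True
  then obtain l where l: "l \<in> Lns" "a \<in> l" "b \<in> l" unfolding collinear_def by blast
  have cl: "card l = 3" "l \<subseteq> Pts" using gq_line[OF g l(1)] by auto
  have "l \<subseteq> perp Pts Lns a \<inter> perp Pts Lns b"
    unfolding perp_def collinear_def using l cl by blast
  moreover have "finite (perp Pts Lns a \<inter> perp Pts Lns b)" using perp_finite[OF g] by blast
  ultimately show ?thesis using cl card_mono by metis
next
  case False
  define M where "M = {l\<in>Lns. a \<in> l}"
  have cM: "card M = 3" using gq_pt[OF g a] unfolding M_def .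
  define h where "h m = (THE y. y \<in> m \<and> collinear Lns b y)" for m
  have hp: "h m \<in> m \<and> collinear Lns b (h m)" if "m \<in> M" for m
  proof -
    have "b \<notin> m" using False that unfolding M_def collinear_def by blast
    moreover have "m \<in> Lns" using that unfolding M_def by simp
    ultimately have "\<exists>!y. y \<in> m \<and> collinear Lns b y" using gq_ax[OF g b] by simp
    then show ?thesis unfolding h_def by (rule theI')
  qed
  have sub: "h ` M \<subseteq> perp Pts Lns a \<inter> perp Pts Lns b"
  proof
    fix z assume "z \<in> h ` M"
    then obtain m where m: "m \<in> M" "z = h m" by blast
    have "m \<subseteq> Pts" using gq_line[OF g] m unfolding M_def by auto
    then have "z \<in> Pts" using hp[OF m(1)] m by auto
    moreover have "collinear Lns a z" using hp[OF m(1)] m unfolding M_def collinear_def by blast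
    moreover have "collinear Lns b z" using hp[OF m(1)] m by simp
    ultimately show "z \<in> perp Pts Lns a \<inter> perp Pts Lns b" unfolding perp_def by blast
  qed
  have inj: "inj_on h M"
  proof
    fix m n assume mn: "m \<in> M" "n \<in> M" "h m = h n"
    have "h m \<noteq> a" using hp[OF mn(1)] False collinear_sym by metis
    have m1: "m \<in> Lns" "a \<in> m" "n \<in> Lns" "a \<in> n" using mn unfolding M_def by auto
    have "h m \<in> m" "h m \<in> n" using hp[OF mn(1)] hp[OF mn(2)] mn(3) by auto
    then show "m = n" using line_unique[OF g m1(1) m1(3) m1(2) m1(4)] \<open>h m \<noteq> a\<close> by metis
  qed
  have "card M \<le> card (perp Pts Lns a \<inter> perp Pts Lns b)"
    using card_inj_on_le[OF inj sub] perp_finite[OF g] by blast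
  then show ?thesis using cM by simp
qed

theorem lemma4p1:
  fixes P :: "'p set" and L :: "'p set set" and P' :: "'q set" and L' :: "'q set set"
    and f :: "'p \<Rightarrow> 'q"
  assumes "gq22 P L" and "gq22 P' L'" and "geom_iso f P L P' L'"
  shows "(\<forall>x\<in>P. \<forall>y\<in>P. x \<noteq> y \<longrightarrow>
            card (setperp (bbP f P P' L') (bbL f P L P' L') {Inr (Inl x), Inr (Inl y)}) \<ge> 3)
       \<and> (\<forall>u\<in>P'. \<forall>v\<in>P'. u \<noteq> v \<longrightarrow>
            card (setperp (bbP f P P' L') (bbL f P L P' L') {Inr (Inr u), Inr (Inr v)}) \<ge> 3)"
proof -
  note g = assms(1) and g' = assms(2)
  have bij: "bij_betw f P P'" using assms(3) unfolding geom_iso_def by blast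
  have inj: "inj_on f P" using bij_betw_imp_inj_on[OF bij] .
  have fP: "f ` P = P'" using bij_betw_imp_surj_on[OF bij] .
  define BP where "BP = bbP f P P' L'"
  define BL where "BL = bbL f P L P' L'"
  define pp where "pp = perp P' L'"
  have line: "{Inr (Inl x), Inl (x, u), Inr (Inr u)} \<in> BL" if "x \<in> P" "u \<in> pp (f x)" for x u
  proof -
    have "f x \<in> P'" using that fP by blast
    then have "u \<in> P'" using perp_sub[OF g'] that pp_def by blast
    then have "(x,u) \<in> calP f P P' L'" using that unfolding calP_def pp_def by blast
    then show ?thesis unfolding BL_def bbL_def by blast
  qed
  have ptP: "Inr (Inl x) \<in> BP" if "x \<in> P" for x using that unfolding BP_def bbP_def by auto
  have ptP': "Inr (Inr u) \<in> BP" if "u \<in> P'" for u using that unfolding BP_def bbP_def by auto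
  have linesX: "\<exists>u. (x,u) \<in> calP f P P' L' \<and> (z = Inr (Inl x) \<or> z = Inl (x,u) \<or> z = Inr (Inr u))"
    if "l \<in> BL" "Inr (Inl x) \<in> l" "z \<in> l" for l x z
  proof -
    from that(1) have "l \<in> (\<lambda>l. Inl ` l) ` calL f P L P' L' \<or>
       l \<in> {{Inr (Inl x), Inl (x, u), Inr (Inr u)} | x u. (x, u) \<in> calP f P P' L'}"
      unfolding BL_def bbL_def by blast
    moreover have "l \<notin> (\<lambda>l. Inl ` l) ` calL f P L P' L'" using that(2) by blast
    ultimately obtain x0 u where l: "l = {Inr (Inl x0), Inl (x0, u), Inr (Inr u)}" "(x0,u) \<in> calP f P P' L'"
      by blast
    then have "x0 = x" using that(2) by blast
    then show ?thesis using l that(3) by blast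
  qed
  have linesU: "\<exists>x. (x,u) \<in> calP f P P' L' \<and> (z = Inr (Inr u) \<or> z = Inl (x,u) \<or> z = Inr (Inl x))"
    if "l \<in> BL" "Inr (Inr u) \<in> l" "z \<in> l" for l u z
  proof -
    from that(1) have "l \<in> (\<lambda>l. Inl ` l) ` calL f P L P' L' \<or>
       l \<in> {{Inr (Inl x), Inl (x, u), Inr (Inr u)} | x u. (x, u) \<in> calP f P P' L'}"
      unfolding BL_def bbL_def by blast
    moreover have "l \<notin> (\<lambda>l. Inl ` l) ` calL f P L P' L'" using that(2) by blast
    ultimately obtain x0 u0 where l: "l = {Inr (Inl x0), Inl (x0, u0), Inr (Inr u0)}" "(x0,u0) \<in> calP f P P' L'"
      by blast
    then have "u0 = u" using that(2) by blast
    then show ?thesis using l that(3) by blast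
  qed
  have A: "3 \<le> card (setperp BP BL {Inr (Inl x), Inr (Inl y)})"
    if xy: "x \<in> P" "y \<in> P" "x \<noteq> y" for x y
  proof -
    let ?S = "setperp BP BL {Inr (Inl x), Inr (Inl y)}"
    have fxy: "f x \<in> P'" "f y \<in> P'" "f x \<noteq> f y" using xy fP inj_on_eq_iff[OF inj xy(1) xy(2)] by auto
    have c: "3 \<le> card (pp (f x) \<inter> pp (f y))" using core[OF g' fxy] pp_def by simp
    have sub: "(Inr \<circ> Inr) ` (pp (f x) \<inter> pp (f y)) \<subseteq> ?S"
    proof
      fix z :: "('p \<times> 'q) + ('p + 'q)" assume "z \<in> (Inr \<circ> Inr) ` (pp (f x) \<inter> pp (f y))"
      then obtain u where u: "u \<in> pp (f x)" "u \<in> pp (f y)" "z = Inr (Inr u)" by auto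
      have "pp (f x) \<subseteq> P'" using perp_sub[OF g' fxy(1)] unfolding pp_def .
      then have uP: "u \<in> P'" using u by blast
      have "z \<in> perp BP BL (Inr (Inl w))" if "w \<in> P" "u \<in> pp (f w)" for w
      proof -
        have "\<exists>l\<in>BL. Inr (Inl w) \<in> l \<and> z \<in> l"
          by (rule bexI[OF _ line[OF that]]) (simp add: u(3))
        then have "collinear BL (Inr (Inl w)) z" unfolding collinear_def .
        then show ?thesis unfolding perp_def using ptP'[OF uP] u(3) by simp
      qed
      then show "z \<in> ?S" unfolding setperp_def using xy u by simp
    qed
    have "perp BP BL (Inr (Inl x)) \<subseteq> insert (Inr (Inl x))
        (Inl ` ({x} \<times> pp (f x)) \<union> (Inr \<circ> Inr) ` pp (f x))"
    proof
      fix z assume "z \<in> perp BP BL (Inr (Inl x))"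
      then have "z = Inr (Inl x) \<or> (\<exists>l\<in>BL. Inr (Inl x) \<in> l \<and> z \<in> l)"
        unfolding perp_def collinear_def by blast
      then show "z \<in> insert (Inr (Inl x)) (Inl ` ({x} \<times> pp (f x)) \<union> (Inr \<circ> Inr) ` pp (f x))"
      proof
        assume "\<exists>l\<in>BL. Inr (Inl x) \<in> l \<and> z \<in> l"
        then obtain l where "l \<in> BL" "Inr (Inl x) \<in> l" "z \<in> l" by blast
        from linesX[OF this] obtain u where "(x,u) \<in> calP f P P' L'"
          "z = Inr (Inl x) \<or> z = Inl (x,u) \<or> z = Inr (Inr u)" by blast
        moreover then have "u \<in> pp (f x)" unfolding calP_def pp_def by blast
        ultimately show ?thesis by auto
      qed simp
    qed
    moreover have "finite (insert (Inr (Inl x)) (Inl ` ({x} \<times> pp (f x)) \<union> (Inr \<circ> Inr) ` pp (f x)))"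
      using perp_finite[OF g'] pp_def by auto
    moreover have "?S \<subseteq> perp BP BL (Inr (Inl x))" unfolding setperp_def by blast
    ultimately have fin: "finite ?S" using finite_subset by metis
    have "card ((Inr \<circ> Inr :: 'q \<Rightarrow> ('p \<times> 'q) + ('p + 'q)) ` (pp (f x) \<inter> pp (f y))) = card (pp (f x) \<inter> pp (f y))"
      by (rule card_image) (auto simp: inj_on_def)
    then have "3 \<le> card ((Inr \<circ> Inr :: 'q \<Rightarrow> ('p \<times> 'q) + ('p + 'q)) ` (pp (f x) \<inter> pp (f y)))" using c by simp
    then show ?thesis using card_mono[OF fin sub] by (rule order.trans)
  qed
  have B: "3 \<le> card (setperp BP BL {Inr (Inr u), Inr (Inr v)})"
    if uv: "u \<in> P'" "v \<in> P'" "u \<noteq> v" for u v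
  proof -
    let ?S = "setperp BP BL {Inr (Inr u), Inr (Inr v)}"
    let ?A = "pp u \<inter> pp v"
    let ?B = "{x\<in>P. f x \<in> ?A}"
    have c: "3 \<le> card ?A" using core[OF g' uv] pp_def by simp
    have "pp u \<subseteq> P'" using perp_sub[OF g' uv(1)] unfolding pp_def .
    then have AP: "?A \<subseteq> P'" by blast
    have fB: "f ` ?B = ?A"
    proof (rule equalityI)
      show "f ` ?B \<subseteq> ?A" by blast
      show "?A \<subseteq> f ` ?B"
      proof
        fix a assume a: "a \<in> ?A"
        then have "a \<in> f ` P" using AP fP by blast
        then obtain x where "x \<in> P" "a = f x" by blast
        then show "a \<in> f ` ?B" using a by blast
      qed
    qed
    have "inj_on f ?B" using inj by (rule inj_on_subset) blast
    then have "card (f ` ?B) = card ?B" by (rule card_image)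
    then have cB: "card ?B = card ?A" using fB by simp
    have sub: "(Inr \<circ> Inl) ` ?B \<subseteq> ?S"
    proof
      fix z :: "('p \<times> 'q) + ('p + 'q)" assume "z \<in> (Inr \<circ> Inl) ` ?B"
      then obtain x where x: "x \<in> P" "f x \<in> pp u" "f x \<in> pp v" "z = Inr (Inl x)" by auto
      have "u \<in> pp (f x)" using perp_sym[of "f x" P' L' u] x(2) uv(1) unfolding pp_def by simp
      moreover have "v \<in> pp (f x)" using perp_sym[of "f x" P' L' v] x(3) uv(2) unfolding pp_def by simp
      moreover have "z \<in> perp BP BL (Inr (Inr w))" if "w \<in> pp (f x)" for w
      proof -
        have "\<exists>l\<in>BL. Inr (Inr w) \<in> l \<and> z \<in> l"
          by (rule bexI[OF _ line[OF x(1) that]]) (simp add: x(4))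
        then have "collinear BL (Inr (Inr w)) z" unfolding collinear_def .
        then show ?thesis unfolding perp_def using ptP[OF x(1)] x(4) by simp
      qed
      ultimately show "z \<in> ?S" unfolding setperp_def by simp
    qed
    let ?C = "{x\<in>P. f x \<in> pp u}"
    have finC: "finite ?C"
    proof -
      have "f ` ?C \<subseteq> pp u" by blast
      then have "finite (f ` ?C)" using perp_finite[OF g'] pp_def finite_subset by metis
      moreover have "inj_on f ?C" using inj by (rule inj_on_subset) blast
      ultimately show ?thesis by (rule finite_imageD)
    qed
    have h1: "perp BP BL (Inr (Inr u)) \<subseteq> insert (Inr (Inr u))
        (Inl ` (?C \<times> {u}) \<union> (Inr \<circ> Inl) ` ?C)"
    proof
      fix z assume "z \<in> perp BP BL (Inr (Inr u))"
      then have zc: "z = Inr (Inr u) \<or> (\<exists>l\<in>BL. Inr (Inr u) \<in> l \<and> z \<in> l)"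
        unfolding perp_def collinear_def by blast
      have r1: "f x \<in> pp u" if "(x,u) \<in> calP f P P' L'" for x
      proof -
        have "x \<in> P" "u \<in> perp P' L' (f x)" using that unfolding calP_def by auto
        moreover have "f x \<in> P'" using calculation(1) fP by blast
        ultimately show ?thesis using perp_sym[of u P' L' "f x"] unfolding pp_def by blast
      qed
      have r2: "x \<in> P" if "(x,u) \<in> calP f P P' L'" for x
        using that unfolding calP_def by blast
      show "z \<in> insert (Inr (Inr u)) (Inl ` (?C \<times> {u}) \<union> (Inr \<circ> Inl) ` ?C)"
        using zc
      proof (elim disjE)
        assume "\<exists>l\<in>BL. Inr (Inr u) \<in> l \<and> z \<in> l"
        then obtain l where "l \<in> BL" "Inr (Inr u) \<in> l" "z \<in> l" by blast
        from linesU[OF this] obtain x where x: "(x,u) \<in> calP f P P' L'"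
          "z = Inr (Inr u) \<or> z = Inl (x,u) \<or> z = Inr (Inl x)" by blast
        have "x \<in> ?C" using r1[OF x(1)] r2[OF x(1)] by blast
        then show ?thesis using x(2) by auto
      qed simp
    qed
    have h2: "finite (insert (Inr (Inr u)) (Inl ` (?C \<times> {u}) \<union> (Inr \<circ> Inl) ` ?C))"
      using finC by auto
    have h3: "?S \<subseteq> perp BP BL (Inr (Inr u))" unfolding setperp_def by blast
    have fin: "finite ?S" by (rule finite_subset[OF h3 finite_subset[OF h1 h2]])
    have "card ((Inr \<circ> Inl :: 'p \<Rightarrow> ('p \<times> 'q) + ('p + 'q)) ` ?B) = card ?B"
      by (rule card_image) (auto simp: inj_on_def)
    then have "3 \<le> card ((Inr \<circ> Inl :: 'p \<Rightarrow> ('p \<times> 'q) + ('p + 'q)) ` ?B)" using c cB by simp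
    then show ?thesis using card_mono[OF fin sub] by (rule order.trans)
  qed
  show ?thesis using A B unfolding BP_def BL_def by blast
qed

end
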